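(* Assume $n > d_{\max}$. For all integers $k_1,\dots,k_x$ with $t_i \le k_i \le a_i$ for every $i$ and $k=\sum_{i=1}^x k_i \le n-d_{\max}$, \[ R(k_1,\dots,k_x) \le \prod_{i=1}^{x}\left(1-\left(1-\frac{k}{n-d_i}\right)^{d_i}\right)^{k_i-t_i} \le \prod_{i=1}^x\left(\frac{d_i\, k}{n-d_{\max}}\right)^{k_i-t_i}. \]
   Context: Random graph model: $V$ is a set of $n$ vertices, $B\subseteq V$ a target set with $|B|=t$, and each $v\in V$ has a prescribed out-degree $d_v$ with $1\le d_{\min}\le d_v\le d_{\max}$ (constants). For each $v$ independently, its out-neighbour set is chosen uniformly at random among all $d_v$-element subsets of $V$. Let $d_1,\dots,d_x$ be the distinct values of the $d_v$, $a_i$ the number of vertices of out-degree $d_i$, and $t_i$ the number of vertices of $B$ of out-degree $d_i$. For a set $S\subseteq V$ with $B\subseteq S$ that contains exactly $k_i$ vertices of out-degree $d_i$ for each $i$, $R(k_1,\dots,k_x)$ denotes the probability that every vertex of $S$ has a directed path to a vertex of $B$ all of whose vertices lie in $S$ (by symmetry this depends only on $k_1,\dots,k_x$). *)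

theory Defs
  imports "HOL-Probability.Probability"
begin

text \<open>Random out-neighbourhoods: each vertex v in V independently picks its out-neighbour
  set uniformly among all d v-element subsets of V (outside V the value is the empty set).\<close>
definition out_nbr_pmf :: "'a set \<Rightarrow> ('a \<Rightarrow> nat) \<Rightarrow> ('a \<Rightarrow> 'a set) pmf" where
  "out_nbr_pmf V d = Pi_pmf V {} (\<lambda>v. pmf_of_set {A. A \<subseteq> V \<and> card A = d v})"

definition arcs_within :: "'a set \<Rightarrow> ('a \<Rightarrow> 'a set) \<Rightarrow> ('a \<times> 'a) set" where
  "arcs_within S N = {(u, w). u \<in> S \<and> w \<in> S \<and> w \<in> N u}"

definition all_reach_within :: "'a set \<Rightarrow> 'a set \<Rightarrow> ('a \<Rightarrow> 'a set) \<Rightarrow> bool" where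
  "all_reach_within S B N \<longleftrightarrow> (\<forall>u\<in>S. \<exists>b\<in>B. (u, b) \<in> (arcs_within S N)\<^sup>*)"

text \<open>The probability R for the concrete set S.\<close>
definition R_prob :: "'a set \<Rightarrow> ('a \<Rightarrow> nat) \<Rightarrow> 'a set \<Rightarrow> 'a set \<Rightarrow> real" where
  "R_prob V d B S = measure_pmf.prob (out_nbr_pmf V d) {N. all_reach_within S B N}"

definition deg_count :: "('a \<Rightarrow> nat) \<Rightarrow> 'a set \<Rightarrow> nat \<Rightarrow> nat" where
  "deg_count d X \<delta> = card {v \<in> X. d v = \<delta>}"

end

theory Submission
  imports Defs
begin

lemma binom_ratio:
  fixes k d n :: nat
  assumes "d + k \<le> n"
  shows "(1 - real k / (real n - real d)) ^ d * real (n choose d) \<le> real ((n - k) choose d)"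
  using assms
proof (induction d arbitrary: n)
  case 0
  then show ?case by simp
next
  case (Suc d)
  then obtain n' where n: "n = Suc n'" by (cases n) auto
  have le: "d + k \<le> n'" using Suc.prems n by simp
  define q where "q = 1 - real k / (real n' - real d)"
  have IH: "q ^ d * real (n' choose d) \<le> real ((n' - k) choose d)"
    using Suc.IH[OF le] by (simp add: q_def)
  have q0: "0 \<le> q"
  proof (cases "k = 0")
    case True then show ?thesis by (simp add: q_def)
  next
    case False
    then have "real n' - real d \<ge> real k" "real k > 0" using le by auto
    then show ?thesis unfolding q_def by (simp add: field_simps)
  qed
  have q1: "q * real (Suc n') \<le> real (Suc (n' - k))"
  proof (cases "k = 0")
    case True then show ?thesis by (simp add: q_def)
  next
    case False
    then have pos: "real n' - real d > 0" "real k > 0" using le by auto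
    have "q * real (Suc n') = real (Suc n') - real k * real (Suc n') / (real n' - real d)"
      unfolding q_def by (simp add: field_simps)
    also have "real k * real (Suc n') / (real n' - real d) \<ge> real k"
      using pos by (simp add: field_simps)
    ultimately show ?thesis using le by simp
  qed
  have e1: "real (Suc n' choose Suc d) = real (Suc n') * real (n' choose d) / real (Suc d)"
    using Suc_times_binomial[of d n'] by (simp add: field_simps flip: of_nat_mult)
  have e2: "real (Suc (n' - k) choose Suc d) = real (Suc (n' - k)) * real ((n'-k) choose d) / real (Suc d)"
    using Suc_times_binomial[of d "n'-k"] by (simp add: field_simps flip: of_nat_mult)
  have "(q * real (Suc n')) * (q ^ d * real (n' choose d)) \<le> real (Suc (n' - k)) * real ((n' - k) choose d)"
    by (rule mult_mono[OF q1 IH]) (use q0 in auto)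
  then have "q ^ Suc d * (real (Suc n') * real (n' choose d)) \<le> real (Suc (n' - k)) * real ((n' - k) choose d)"
    by (simp add: algebra_simps)
  then have "q ^ Suc d * (real (Suc n') * real (n' choose d)) / real (Suc d) \<le> real (Suc (n' - k)) * real ((n' - k) choose d) / real (Suc d)"
    by (rule divide_right_mono) simp
  then have "q ^ Suc d * real (Suc n' choose Suc d) \<le> real (Suc (n' - k) choose Suc d)"
    unfolding e1 e2 by (simp add: times_divide_eq_right)
  moreover have "Suc n' - k = Suc (n' - k)" using le by simp
  ultimately show ?case unfolding n q_def by simp
qed

lemma reach_imp:
  assumes "all_reach_within S B N" "v \<in> S" "v \<notin> B"
  shows "N v \<inter> S \<noteq> {}"
proof -
  obtain b where b: "b \<in> B" "(v, b) \<in> (arcs_within S N)\<^sup>*"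
    using assms unfolding all_reach_within_def by auto
  have "v \<noteq> b" using b assms by auto
  then obtain w where "(v, w) \<in> arcs_within S N"
    using b(2) by (metis converse_rtranclE)
  then show ?thesis unfolding arcs_within_def by auto
qed

lemma prob_hit:
  fixes V S :: "'a set"
  assumes "finite V" "S \<subseteq> V" "card V = n" "\<delta> \<le> n" "\<delta> + card S \<le> n"
  shows "measure_pmf.prob (pmf_of_set {A. A \<subseteq> V \<and> card A = \<delta>}) {X. X \<inter> S \<noteq> {}}
           \<le> 1 - (1 - real (card S) / (real n - real \<delta>)) ^ \<delta>"
proof -
  let ?A = "{A. A \<subseteq> V \<and> card A = \<delta>}"
  have fin: "finite ?A" using assms(1) by simp
  have cA: "card ?A = n choose \<delta>" using n_subsets[OF assms(1)] assms(3) by simp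
  have npos: "n choose \<delta> > 0" using assms(4) by simp
  have ne: "?A \<noteq> {}"
  proof
    assume h: "?A = {}"
    have "card ?A = 0" by (simp only: h card.empty)
    then show False using cA npos by simp
  qed
  have fS: "finite S" using assms(1,2) finite_subset by auto
  have eq: "?A \<inter> {X. X \<inter> S = {}} = {A. A \<subseteq> V - S \<and> card A = \<delta>}" by auto
  have cS: "card (V - S) = n - card S" using assms(1-3) fS by (simp add: card_Diff_subset)
  have "measure_pmf.prob (pmf_of_set ?A) {X. X \<inter> S = {}} = real ((n - card S) choose \<delta>) / real (n choose \<delta>)"
    unfolding measure_pmf_of_set[OF ne fin] eq cA
    using n_subsets[of "V - S" \<delta>] assms(1) cS by simp
  moreover have "measure_pmf.prob (pmf_of_set ?A) {X. X \<inter> S \<noteq> {}}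
      = 1 - measure_pmf.prob (pmf_of_set ?A) {X. X \<inter> S = {}}"
  proof -
    have "{X. X \<inter> S \<noteq> {}} = UNIV - {X. X \<inter> S = {}}" by auto
    then show ?thesis using measure_pmf.prob_compl[of "{X. X \<inter> S = {}}" "pmf_of_set ?A"]
      by simp
  qed
  moreover have "(1 - real (card S) / (real n - real \<delta>)) ^ \<delta> \<le> real ((n - card S) choose \<delta>) / real (n choose \<delta>)"
    using binom_ratio[of \<delta> "card S" n] assms(5) npos by (simp add: field_simps)
  ultimately show ?thesis by simp
qed

theorem lemma1:
  fixes V B S :: "'a set" and d :: "'a \<Rightarrow> nat" and n dmax :: nat
  assumes "finite V" and "card V = n"
    and "B \<subseteq> V"
    and "\<And>v. v \<in> V \<Longrightarrow> 1 \<le> d v"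
    and "\<And>v. v \<in> V \<Longrightarrow> d v \<le> dmax"
    and "n > dmax"
    and "B \<subseteq> S" and "S \<subseteq> V"
    and "card S \<le> n - dmax"
  shows "R_prob V d B S
           \<le> (\<Prod>\<delta>\<in>d ` V. (1 - (1 - real (card S) / (real n - real \<delta>)) ^ \<delta>)
                              ^ (deg_count d S \<delta> - deg_count d B \<delta>))
       \<and> (\<Prod>\<delta>\<in>d ` V. (1 - (1 - real (card S) / (real n - real \<delta>)) ^ \<delta>)
                              ^ (deg_count d S \<delta> - deg_count d B \<delta>))
           \<le> (\<Prod>\<delta>\<in>d ` V. (real \<delta> * real (card S) / (real n - real (dmax)))
                              ^ (deg_count d S \<delta> - deg_count d B \<delta>))"
proof
  define f where "f = (\<lambda>\<delta>::nat. 1 - (1 - real (card S) / (real n - real \<delta>)) ^ \<delta>)"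
  define p where "p = (\<lambda>v. pmf_of_set {A. A \<subseteq> V \<and> card A = d v})"
  define Bs where "Bs = (\<lambda>v. if v \<in> S - B then {X. X \<inter> S \<noteq> {}} else (UNIV :: 'a set set))"
  have fS: "finite S" using assms(1,8) finite_subset by auto
  have "R_prob V d B S \<le> measure_pmf.prob (Pi_pmf V {} p) (Pi V Bs)"
    unfolding R_prob_def out_nbr_pmf_def p_def[symmetric]
    by (rule measure_pmf.finite_measure_mono)
       (auto simp: Bs_def dest: reach_imp)
  also have "\<dots> = (\<Prod>v\<in>V. measure_pmf.prob (p v) (Bs v))"
    by (rule measure_Pi_pmf_Pi[OF assms(1)])
  also have "\<dots> = (\<Prod>v\<in>S - B. measure_pmf.prob (p v) {X. X \<inter> S \<noteq> {}})"
  proof -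
    have "(\<Prod>v\<in>V. measure_pmf.prob (p v) (Bs v)) = (\<Prod>v\<in>S - B. measure_pmf.prob (p v) (Bs v))"
      by (rule prod.mono_neutral_right) (use assms(1,8) in \<open>auto simp: Bs_def\<close>)
    then show ?thesis by (simp add: Bs_def)
  qed
  also have "\<dots> \<le> (\<Prod>v\<in>S - B. f (d v))"
  proof (rule prod_mono, rule conjI)
    fix v assume v: "v \<in> S - B"
    then have "v \<in> V" using assms(8) by auto
    then have "d v \<le> dmax" using assms(5) by auto
    then show "measure_pmf.prob (p v) {X. X \<inter> S \<noteq> {}} \<le> f (d v)"
      unfolding p_def f_def using prob_hit[OF assms(1) assms(8) assms(2), of "d v"] assms(6,9) by simp
  qed simp
  also have "\<dots> = (\<Prod>\<delta>\<in>d ` V. f \<delta> ^ (deg_count d S \<delta> - deg_count d B \<delta>))"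
  proof -
    have "(\<Prod>v\<in>S - B. f (d v)) = (\<Prod>\<delta>\<in>d ` V. \<Prod>v\<in>{x. x \<in> S - B \<and> d x = \<delta>}. f (d v))"
      by (rule prod.group[symmetric]) (use fS assms(1,8) in auto)
    also have "\<dots> = (\<Prod>\<delta>\<in>d ` V. f \<delta> ^ card {x. x \<in> S - B \<and> d x = \<delta>})"
      by (rule prod.cong) auto
    also have "\<dots> = (\<Prod>\<delta>\<in>d ` V. f \<delta> ^ (deg_count d S \<delta> - deg_count d B \<delta>))"
    proof (rule prod.cong[OF refl])
      fix \<delta>
      have "{x. x \<in> S - B \<and> d x = \<delta>} = {v \<in> S. d v = \<delta>} - {v \<in> B. d v = \<delta>}" by auto
      moreover have "{v \<in> B. d v = \<delta>} \<subseteq> {v \<in> S. d v = \<delta>}" using assms(7) by auto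
      moreover have "finite {v \<in> B. d v = \<delta>}" using fS assms(7) by (auto intro: finite_subset)
      ultimately show "f \<delta> ^ card {x. x \<in> S - B \<and> d x = \<delta>} = f \<delta> ^ (deg_count d S \<delta> - deg_count d B \<delta>)"
        unfolding deg_count_def using fS by (simp add: card_Diff_subset)
    qed
    finally show ?thesis .
  qed
  finally show "R_prob V d B S \<le> (\<Prod>\<delta>\<in>d ` V. (1 - (1 - real (card S) / (real n - real \<delta>)) ^ \<delta>)
                              ^ (deg_count d S \<delta> - deg_count d B \<delta>))"
    unfolding f_def .
next
  show "(\<Prod>\<delta>\<in>d ` V. (1 - (1 - real (card S) / (real n - real \<delta>)) ^ \<delta>)
                              ^ (deg_count d S \<delta> - deg_count d B \<delta>))
           \<le> (\<Prod>\<delta>\<in>d ` V. (real \<delta> * real (card S) / (real n - real (dmax)))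
                              ^ (deg_count d S \<delta> - deg_count d B \<delta>))"
  proof (rule prod_mono, rule conjI)
    fix \<delta> assume "\<delta> \<in> d ` V"
    then have dl: "\<delta> \<le> dmax" using assms(5) by auto
    define x where "x = real (card S) / (real n - real \<delta>)"
    have pos: "real n - real \<delta> > 0" "real n - real dmax > 0" using dl assms(6) by auto
    have x0: "0 \<le> x" "x \<le> 1" unfolding x_def using pos assms(9) dl assms(6) by (auto simp: field_simps)
    have a: "0 \<le> 1 - (1 - x) ^ \<delta>" using x0 by (simp add: power_le_one)
    have "1 + real \<delta> * (- x) \<le> (1 + - x) ^ \<delta>"
      by (rule Bernoulli_inequality) (use x0 in simp)
    then have b: "1 - (1 - x) ^ \<delta> \<le> real \<delta> * x" by simp
    have c: "real \<delta> * x \<le> real \<delta> * real (card S) / (real n - real dmax)"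
      unfolding x_def using pos dl by (simp add: frac_le divide_left_mono mult_left_mono flip: times_divide_eq_right)
    show "0 \<le> (1 - (1 - real (card S) / (real n - real \<delta>)) ^ \<delta>) ^ (deg_count d S \<delta> - deg_count d B \<delta>)"
      using a unfolding x_def by simp
    show "(1 - (1 - real (card S) / (real n - real \<delta>)) ^ \<delta>) ^ (deg_count d S \<delta> - deg_count d B \<delta>)
        \<le> (real \<delta> * real (card S) / (real n - real dmax)) ^ (deg_count d S \<delta> - deg_count d B \<delta>)"
      by (rule power_mono) (use a b c in \<open>simp_all add: x_def\<close>)
  qed
qed

end
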